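(* Consider a scenario tree with node sets $\mathcal{N}(0)=\{0\},\mathcal{N}(1),\ldots,\mathcal{N}(t+1)$ and let $(\rho_{|0},\ldots,\rho_{|t})$ be a sequence of conditional risk mappings on this tree, each built from coherent risk measures, with $\rho_{|j}:\mathbb{R}^{|\mathcal{N}(j+1)|}\to\mathbb{R}^{|\mathcal{N}(j)|}$. Let $\bar\rho_t:\mathbb{R}^{|\mathcal{N}(t+1)|}\to\mathbb{R}$ be the nested risk measure $\bar\rho_t[Y]=\rho_{|0}[\rho_{|1}[\cdots\rho_{|t}[Y]\cdots]]$. Then $$\operatorname{epi}\bar\rho_t=\Big\{(Y_{t+1},Y_0)\in\mathbb{R}^{|\mathcal{N}(t+1)|+1}\ \Big|\ \exists\,(Y_j)_{j=1}^{t},\ Y_j\in\mathbb{R}^{|\mathcal{N}(j)|},\ (Y_{j+1},Y_j)\in\operatorname{epi}\rho_{|j}\ \text{for all } j\in\{0,1,\ldots,t\}\Big\}.$$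
   Context: A scenario tree: nodes are partitioned into stages, $\mathcal{N}(j)$ being the nodes at stage $j$, with the single root $0$ at stage $0$ visited with probability $\pi^0=1$; each node $i$ is visited with probability $\pi^i>0$, each non-root node has a unique ancestor, and each node $i\in\mathcal{N}(j)$ has a set of children $\mathrm{ch}(i)\subseteq\mathcal{N}(j+1)$, the sets $\mathrm{ch}(i)$, $i\in\mathcal{N}(j)$, partitioning $\mathcal{N}(j+1)$; $\mathrm{ch}(i)$ is a probability space with probability vector $\pi^{[i]}=\frac{1}{\pi^i}(\pi^{i_+})_{i_+\in\mathrm{ch}(i)}$. A coherent risk measure $\rho:\mathbb{R}^k\to\mathbb{R}$ (on a finite probability space) satisfies, for all $Z,Z'$, $c\in\mathbb{R}$, $\lambda\in[0,1]$, $\alpha\ge0$: convexity $\rho[\lambda Z+(1-\lambda)Z']\le\lambda\rho[Z]+(1-\lambda)\rho[Z']$; monotonicity $\rho[Z]\le\rho[Z']$ if $Z\le Z'$ componentwise; translation equivariance $\rho[Z+c\mathbf{1}]=\rho[Z]+c$; positive homogeneity $\rho[\alpha Z]=\alpha\rho[Z]$. Given coherent risk measures $\rho^i:\mathbb{R}^{|\mathrm{ch}(i)|}\to\mathbb{R}$ on $\mathrm{ch}(i)$ for each $i\in\mathcal{N}(j)$, the conditional risk mapping at stage $j$ is $\rho_{|j}[Z]=(\rho^i[Z^{[i]}])_{i\in\mathcal{N}(j)}$ for $Z=(Z^{i_+})_{i_+\in\mathcal{N}(j+1)}$, where $Z^{[i]}=(Z^{i_+})_{i_+\in\mathrm{ch}(i)}$.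 Its epigraph is $\operatorname{epi}\rho_{|j}=\{(Y_{j+1},Y_j)\in\mathbb{R}^{|\mathcal{N}(j+1)|+|\mathcal{N}(j)|}\mid \rho_{|j}[Y_{j+1}]\le Y_j\text{ componentwise}\}$. For a real-valued $\rho$, $\operatorname{epi}\rho=\{(Y,\gamma)\mid\rho[Y]\le\gamma\}$. *)

theory Defs
  imports Complex_Main
begin

text \<open>Nodes have an abstract type 'n.  A vector in R^{A} (A a finite set of nodes)
  is represented by a function 'n => real, only its values on A being relevant.\<close>

definition scenario_tree ::
  "nat \<Rightarrow> (nat \<Rightarrow> 'n set) \<Rightarrow> 'n \<Rightarrow> ('n \<Rightarrow> 'n set) \<Rightarrow> ('n \<Rightarrow> real) \<Rightarrow> bool" where
  "scenario_tree t N r ch \<pi> \<longleftrightarrow>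
     N 0 = {r} \<and> \<pi> r = 1 \<and>
     (\<forall>j \<le> Suc t. finite (N j)) \<and>
     (\<forall>j \<le> Suc t. \<forall>k \<le> Suc t. j \<noteq> k \<longrightarrow> N j \<inter> N k = {}) \<and>
     (\<forall>j \<le> Suc t. \<forall>i \<in> N j. \<pi> i > 0) \<and>
     (\<forall>j \<le> t. \<forall>i \<in> N j. ch i \<subseteq> N (Suc j)) \<and>
     (\<forall>j \<le> t. N (Suc j) = (\<Union>i \<in> N j. ch i)) \<and>
     (\<forall>j \<le> t. \<forall>i \<in> N j. \<forall>i' \<in> N j. i \<noteq> i' \<longrightarrow> ch i \<inter> ch i' = {}) \<and>
     (\<forall>j \<le> t. \<forall>i \<in> N j. (\<Sum>k \<in> ch i. \<pi> k) = \<pi> i)"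

text \<open>Coherent risk measure on the (finite) probability space A: a map
  R^A -> R, represented as a function on 'n => real that only depends on the values on A
  (this is implied by monotonicity w.r.t. the componentwise order on A).\<close>
definition coherent_on :: "'n set \<Rightarrow> (('n \<Rightarrow> real) \<Rightarrow> real) \<Rightarrow> bool" where
  "coherent_on A \<rho> \<longleftrightarrow>
     (\<forall>Z Z' (l::real). 0 \<le> l \<and> l \<le> 1 \<longrightarrow>
        \<rho> (\<lambda>x. l * Z x + (1 - l) * Z' x) \<le> l * \<rho> Z + (1 - l) * \<rho> Z') \<and>
     (\<forall>Z Z'. (\<forall>x \<in> A. Z x \<le> Z' x) \<longrightarrow> \<rho> Z \<le> \<rho> Z') \<and>
     (\<forall>Z (c::real). \<rho> (\<lambda>x. Z x + c) = \<rho> Z + c) \<and>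
     (\<forall>Z (\<alpha>::real). 0 \<le> \<alpha> \<longrightarrow> \<rho> (\<lambda>x. \<alpha> * Z x) = \<alpha> * \<rho> Z)"

definition cond_risk :: "('n \<Rightarrow> ('n \<Rightarrow> real) \<Rightarrow> real) \<Rightarrow> (nat \<Rightarrow> 'n set) \<Rightarrow> nat
    \<Rightarrow> ('n \<Rightarrow> real) \<Rightarrow> ('n \<Rightarrow> real)" where
  "cond_risk \<rho> N j Z = (\<lambda>i. if i \<in> N j then \<rho> i Z else 0)"

definition epi_cond :: "('n \<Rightarrow> ('n \<Rightarrow> real) \<Rightarrow> real) \<Rightarrow> (nat \<Rightarrow> 'n set) \<Rightarrow> nat
    \<Rightarrow> (('n \<Rightarrow> real) \<times> ('n \<Rightarrow> real)) set" where
  "epi_cond \<rho> N j = {(Ynext, Ycur). \<forall>i \<in> N j. cond_risk \<rho> N j Ynext i \<le> Ycur i}"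

fun nest :: "('n \<Rightarrow> ('n \<Rightarrow> real) \<Rightarrow> real) \<Rightarrow> (nat \<Rightarrow> 'n set) \<Rightarrow> nat \<Rightarrow> nat
    \<Rightarrow> ('n \<Rightarrow> real) \<Rightarrow> ('n \<Rightarrow> real)" where
  "nest \<rho> N j 0 Y = Y"
| "nest \<rho> N j (Suc k) Y = cond_risk \<rho> N j (nest \<rho> N (Suc j) k Y)"

definition nested_risk :: "('n \<Rightarrow> ('n \<Rightarrow> real) \<Rightarrow> real) \<Rightarrow> (nat \<Rightarrow> 'n set) \<Rightarrow> 'n \<Rightarrow> nat
    \<Rightarrow> ('n \<Rightarrow> real) \<Rightarrow> real" where
  "nested_risk \<rho> N r t Y = nest \<rho> N 0 (Suc t) Y r"

definition epi :: "(('n \<Rightarrow> real) \<Rightarrow> real) \<Rightarrow> (('n \<Rightarrow> real) \<times> real) set" where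
  "epi f = {(Y, \<gamma>). f Y \<le> \<gamma>}"

end

theory Submission
  imports Defs
begin

lemma down:
  assumes tree: "scenario_tree t N r ch \<pi>"
    and coh: "\<And>j i. j \<le> t \<Longrightarrow> i \<in> N j \<Longrightarrow> coherent_on (ch i) (\<rho> i)"
    and Ys: "Ys (Suc t) = Y" "\<forall>j \<le> t. (Ys (Suc j), Ys j) \<in> epi_cond \<rho> N j"
  shows "k \<le> Suc t \<Longrightarrow> \<forall>i \<in> N (Suc t - k). nest \<rho> N (Suc t - k) k Y i \<le> Ys (Suc t - k) i"
proof (induction k)
  case 0
  then show ?case using Ys by simp
next
  case (Suc k)
  define j where "j = t - k"
  have jt: "j \<le> t" and e1: "Suc t - Suc k = j" and e2: "Suc t - k = Suc j"
    using Suc.prems by (auto simp: j_def)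
  have IH: "\<forall>i \<in> N (Suc j). nest \<rho> N (Suc j) k Y i \<le> Ys (Suc j) i"
    using Suc.IH Suc.prems e2 by (metis Suc_leD)
  show ?case unfolding e1
  proof
    fix i assume i: "i \<in> N j"
    have "\<forall>j \<le> t. \<forall>i \<in> N j. ch i \<subseteq> N (Suc j)" using tree unfolding scenario_tree_def by (elim conjE) assumption
    then have sub: "ch i \<subseteq> N (Suc j)" using jt i by blast
    have mono: "\<forall>Z Z'. (\<forall>x \<in> ch i. Z x \<le> Z' x) \<longrightarrow> \<rho> i Z \<le> \<rho> i Z'"
      using coh[OF jt i] unfolding coherent_on_def by blast
    have "nest \<rho> N j (Suc k) Y i = \<rho> i (nest \<rho> N (Suc j) k Y)"
      using i by (simp add: cond_risk_def)
    also have "\<dots> \<le> \<rho> i (Ys (Suc j))" using IH sub by (intro mono[rule_format]) auto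
    also have "\<dots> \<le> Ys j i"
    proof -
      have "(Ys (Suc j), Ys j) \<in> epi_cond \<rho> N j" using Ys(2) jt by blast
      then show ?thesis using i by (simp add: epi_cond_def cond_risk_def)
    qed
    finally show "nest \<rho> N j (Suc k) Y i \<le> Ys j i" .
  qed
qed

theorem proposition1:
  fixes t :: nat and N :: "nat \<Rightarrow> 'n set" and r :: 'n and ch :: "'n \<Rightarrow> 'n set"
    and \<pi> :: "'n \<Rightarrow> real" and \<rho> :: "'n \<Rightarrow> ('n \<Rightarrow> real) \<Rightarrow> real"
  assumes tree: "scenario_tree t N r ch \<pi>"
    and coh: "\<And>j i. j \<le> t \<Longrightarrow> i \<in> N j \<Longrightarrow> coherent_on (ch i) (\<rho> i)"
  shows "epi (nested_risk \<rho> N r t) =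
    {(Y, \<gamma>). \<exists>Ys :: nat \<Rightarrow> 'n \<Rightarrow> real.
        Ys (Suc t) = Y \<and> Ys 0 r = \<gamma> \<and>
        (\<forall>j \<le> t. (Ys (Suc j), Ys j) \<in> epi_cond \<rho> N j)}"
proof -
  have N0: "N 0 = {r}" using tree unfolding scenario_tree_def by (elim conjE)
  show ?thesis
  proof (intro set_eqI iffI)
    fix p assume "p \<in> epi (nested_risk \<rho> N r t)"
    then obtain Y \<gamma> where p: "p = (Y, \<gamma>)" and le: "nest \<rho> N 0 (Suc t) Y r \<le> \<gamma>"
      by (cases p) (auto simp: epi_def nested_risk_def)
    define Ys where "Ys = (\<lambda>j. if j = 0 then (\<lambda>i. if i = r then \<gamma> else nest \<rho> N 0 (Suc t) Y i)
                        else nest \<rho> N j (Suc t - j) Y)"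
    have "(Ys (Suc j), Ys j) \<in> epi_cond \<rho> N j" if j: "j \<le> t" for j
    proof (cases "j = 0")
      case True
      then show ?thesis using le N0 by (simp add: Ys_def epi_cond_def cond_risk_def)
    next
      case False
      have "Suc t - j = Suc (t - j)" using j by simp
      then show ?thesis using False by (simp add: Ys_def epi_cond_def)
    qed
    moreover have "Ys (Suc t) = Y" by (simp add: Ys_def)
    moreover have "Ys 0 r = \<gamma>" by (simp add: Ys_def)
    ultimately show "p \<in> {(Y, \<gamma>). \<exists>Ys :: nat \<Rightarrow> 'n \<Rightarrow> real.
        Ys (Suc t) = Y \<and> Ys 0 r = \<gamma> \<and>
        (\<forall>j \<le> t. (Ys (Suc j), Ys j) \<in> epi_cond \<rho> N j)}" using p by blast
  next
    fix p assume "p \<in> {(Y, \<gamma>). \<exists>Ys :: nat \<Rightarrow> 'n \<Rightarrow> real.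
        Ys (Suc t) = Y \<and> Ys 0 r = \<gamma> \<and>
        (\<forall>j \<le> t. (Ys (Suc j), Ys j) \<in> epi_cond \<rho> N j)}"
    then obtain Y \<gamma> Ys where p: "p = (Y, \<gamma>)" and Ys: "Ys (Suc t) = Y" "Ys 0 r = \<gamma>"
      "\<forall>j \<le> t. (Ys (Suc j), Ys j) \<in> epi_cond \<rho> N j" by blast
    have "\<forall>i \<in> N (Suc t - Suc t). nest \<rho> N (Suc t - Suc t) (Suc t) Y i \<le> Ys (Suc t - Suc t) i"
      by (rule down[OF tree coh Ys(1) Ys(3)]) auto
    then have "nest \<rho> N 0 (Suc t) Y r \<le> \<gamma>" using N0 Ys(2) by simp
    then show "p \<in> epi (nested_risk \<rho> N r t)" using p by (simp add: epi_def nested_risk_def)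
  qed
qed

end
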